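(* Let $A=(a,\ ha+d,\ ha+2d,\ ha+4d,\ \dots,\ ha+2kd)$ where $\gcd(a,d)=1$, $a,h,d,k\in\mathbb{P}$, $a>2$, $d>h$, $1\le 2k\le a-1$. Write $a-1=2ks+t$ with $1\le t\le 2k$. Then \begin{align*} \sum_{r=0}^{a-1}x^{N_r}&=1+\frac{x^{ha+d}\big(1-x^{(ha+2kd)(s+1)}\big)}{1-x^{ha+2kd}}+\frac{x^{ha+2d}\big(1-x^{(ha+2kd)s}\big)\big(1-x^{2dk}\big)}{(1-x^{ha+2kd})(1-x^{2d})}\\ &\quad+\frac{x^{2ha+3d}\big(1-x^{(ha+2kd)s}\big)\big(1-x^{2d(k-1)}\big)}{(1-x^{ha+2kd})(1-x^{2d})}+f_1(x), \end{align*} where $$f_1(x)=\begin{cases}\dfrac{x^{ha(s+1)+d(2ks+2)}\big(1-x^{d(t-1)}\big)}{1-x^{2d}}+\dfrac{x^{ha(s+2)+d(2ks+3)}\big(1-x^{d(t-1)}\big)}{1-x^{2d}} & \text{if } t \text{ is odd},\\[8pt] \dfrac{x^{ha(s+1)+d(2ks+2)}\big(1-x^{dt}\big)}{1-x^{2d}}+\dfrac{x^{ha(s+2)+d(2ks+3)}\big(1-x^{d(t-2)}\big)}{1-x^{2d}} & \text{if } t \text{ is even}.\end{cases}$$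
   Context: For $A=(a,c_1,\dots,c_m)$ of positive integers with $\gcd(A)=1$ and $0\le r\le a-1$, $N_r$ is the least nonnegative integer $a_0\equiv r\pmod a$ that can be written as $\sum_{i=1}^m c_ix_i$ with all $x_i$ nonnegative integers. $\mathbb{P}=\{1,2,\dots\}$. *)

theory Defs
  imports Complex_Main
begin

definition representable :: "nat list \<Rightarrow> nat \<Rightarrow> bool" where
  "representable cs n \<longleftrightarrow>
     (\<exists>xs. length xs = length cs \<and> n = (\<Sum>i<length cs. cs ! i * xs ! i))"

definition N :: "nat \<Rightarrow> nat list \<Rightarrow> nat \<Rightarrow> nat" where
  "N a cs r = (LEAST n. n mod a = r \<and> representable cs n)"

text \<open>The generators ha+d, ha+2d, ha+4d, ..., ha+2kd (the tuple A without a).\<close>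
definition gens :: "nat \<Rightarrow> nat \<Rightarrow> nat \<Rightarrow> nat \<Rightarrow> nat list" where
  "gens a h d k = (h*a + d) # map (\<lambda>j. h*a + 2*j*d) [1..<k+1]"

end

theory Submission imports Defs "HOL-Number_Theory.Number_Theory" begin

lemma rep_zero: "representable cs 0"
  unfolding representable_def by (rule exI[of _ "replicate (length cs) 0"]) simp

lemma rep_step:
  assumes "representable cs n" "i < length cs"
  shows "representable cs (n + cs ! i)"
proof -
  obtain xs where xs: "length xs = length cs" "n = (\<Sum>j<length cs. cs ! j * xs ! j)"
    using assms(1) unfolding representable_def by blast
  let ?ys = "xs[i := xs ! i + 1]"
  have "(\<Sum>j<length cs. cs ! j * ?ys ! j) = (\<Sum>j<length cs. cs ! j * xs ! j + (if j = i then cs ! i else 0))"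
    by (rule sum.cong) (auto simp: xs(1) nth_list_update)
  also have "\<dots> = n + cs ! i" using assms(2) by (simp add: sum.distrib xs(2))
  finally show ?thesis unfolding representable_def using xs(1)
    by (intro exI[of _ ?ys]) simp
qed

lemma gens_len: "length (gens a h d k) = k + 1"
  by (simp add: gens_def)

lemma gens_nth: "i \<le> k \<Longrightarrow> gens a h d k ! i = h*a + (if i = 0 then 1 else 2*i)*d"
proof (cases i)
  case 0 then show ?thesis by (simp add: gens_def)
next
  case (Suc j)
  assume "i \<le> k"
  then have "j < k" using Suc by simp
  have "gens a h d k ! i = map (\<lambda>j. h * a + 2 * j * d) [1..<k + 1] ! j"
    unfolding gens_def Suc by (simp only: nth_Cons_Suc)
  also have "\<dots> = h*a + 2*(1+j)*d"
  proof -
    have "1 + j < k + 1" using \<open>j < k\<close> by simp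
    note u = nth_upt[OF this]
    have "j < length [1..<k + 1]" using \<open>j < k\<close> by simp
    from nth_map[OF this, of "\<lambda>j. h * a + 2 * j * d"] u show ?thesis by simp
  qed
  finally show ?thesis using Suc by simp
qed

definition mm :: "nat \<Rightarrow> nat \<Rightarrow> nat" where
  "mm k c = (if even c then (c + 2*k - 1) div (2*k) else (c + 2*k - 2) div (2*k) + 1)"

lemma div_help: "(r::nat) < b \<Longrightarrow> (b*q + r) div b = q"
  by simp

lemma rep_even:
  assumes "k > 0"
  shows "representable (gens a h d k) (mm k (2*q) * h * a + 2*q*d)"
proof (induction q rule: less_induct)
  case (less q)
  show ?case
  proof (cases "q = 0")
    case True
    have "mm k 0 = 0" using assms by (simp add: mm_def)
    then show ?thesis using True rep_zero by simp
  next
    case False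
    show ?thesis
    proof (cases "q \<le> k")
      case True
      have "2*q + 2*k - 1 = 2*k*1 + (2*q - 1)" using False by simp
      moreover have "(2*k*1 + (2*q - 1)) div (2*k) = 1" using True False by (intro div_help) auto
      ultimately have "mm k (2*q) = 1" by (simp add: mm_def)
      moreover have "gens a h d k ! q = h*a + 2*q*d" using True False by (simp add: gens_nth)
      ultimately show ?thesis using rep_step[OF rep_zero, of q "gens a h d k"] True
        by (simp add: gens_len)
    next
      case F: False
      obtain p where p: "q = k + p" using F by (metis less_imp_add_positive not_le)
      have eq: "2*q + 2*k - 1 = 2*k + (2*p + 2*k - 1)" using p assms by simp
      have "mm k (2*q) = (2*q + 2*k - 1) div (2*k)" by (simp add: mm_def)
      also have "\<dots> = (2*k + (2*p + 2*k - 1)) div (2*k)" using eq by (rule arg_cong)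
      also have "\<dots> = (2*p + 2*k - 1) div (2*k) + 1" using div_add_self1[of "2*k" "2*p + 2*k - 1"] assms by linarith
      also have "\<dots> = mm k (2*p) + 1" by (simp add: mm_def)
      finally have "mm k (2*q) = mm k (2*p) + 1" .
      note mmq = this
      have pq: "p < q" using p assms by simp
      have gk: "gens a h d k ! k = h*a + 2*k*d" using assms by (simp add: gens_nth)
      have r: "representable (gens a h d k) (mm k (2*p) * h * a + 2*p*d + gens a h d k ! k)"
        by (rule rep_step[OF less[OF pq]]) (simp add: gens_len)
      have e1: "(M+1)*h*a + (2*p*d + 2*k*d) = M*h*a + 2*p*d + (h*a + 2*k*d)" for M :: nat
        by (simp add: algebra_simps)
      have e2: "2*q*d = 2*p*d + 2*k*d" using p by (simp add: algebra_simps)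
      show ?thesis using r unfolding mmq e2 gk e1 .
    qed
  qed
qed

lemma rep_odd:
  assumes "k > 0"
  shows "representable (gens a h d k) (mm k (2*q+1) * h * a + (2*q+1)*d)"
proof -
  have "mm k (2*q+1) = mm k (2*q) + 1" using assms by (simp add: mm_def)
  note mmq = this
  have g0: "gens a h d k ! 0 = h*a + d" by (simp add: gens_nth)
  have r: "representable (gens a h d k) (mm k (2*q) * h * a + 2*q*d + gens a h d k ! 0)"
    by (rule rep_step[OF rep_even[OF assms]]) (simp add: gens_len)
  have e1: "(M+1)*h*a + (2*q+1)*d = M*h*a + 2*q*d + (h*a + d)" for M :: nat
    by (simp add: algebra_simps)
  show ?thesis using r unfolding mmq g0 e1 .
qed

lemma rep_mm:
  assumes "k > 0"
  shows "representable (gens a h d k) (mm k c * h * a + c*d)"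
proof (cases "even c")
  case True then obtain q where "c = 2*q" by blast
  then show ?thesis using rep_even[OF assms, of a h d q] by simp
next
  case False then obtain q where "c = 2*q+1" using oddE by blast
  then show ?thesis using rep_odd[OF assms, of a h d q] by simp
qed

lemma rep_decomp:
  assumes "representable (gens a h d k) n" "k > 0"
  shows "\<exists>M C. n = M*h*a + C*d \<and> C \<le> 2*k*M \<and> (odd C \<longrightarrow> C + 2*k \<le> 2*k*M + 1)"
proof -
  obtain xs where xs: "length xs = k+1" "n = (\<Sum>i<k+1. gens a h d k ! i * xs ! i)"
    using assms(1) unfolding representable_def gens_len by auto
  define w where "w i = (if i = 0 then 1 else 2*i)" for i :: nat
  define M where "M = (\<Sum>i<k+1. xs ! i)"
  define C where "C = (\<Sum>i<k+1. w i * xs ! i)"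
  have "n = (\<Sum>i<k+1. h*a * xs ! i + d * (w i * xs ! i))"
    unfolding xs(2) by (rule sum.cong) (auto simp: gens_nth w_def algebra_simps)
  also have "\<dots> = M*h*a + C*d"
    by (simp add: sum.distrib M_def C_def sum_distrib_left sum_distrib_right algebra_simps)
  finally have nMC: "n = M*h*a + C*d" .
  have "C \<le> (\<Sum>i<k+1. 2*k * xs ! i)"
    unfolding C_def by (rule sum_mono) (use assms(2) in \<open>auto simp: w_def\<close>)
  also have "\<dots> = 2*k*M" unfolding M_def by (rule sum_distrib_left[symmetric])
  finally have CM: "C \<le> 2*k*M" .
  define S where "S = (\<Sum>i<k. xs ! Suc i)"
  define E where "E = (\<Sum>i<k. w (Suc i) * xs ! Suc i)"
  have MS: "M = xs ! 0 + S" unfolding M_def S_def by (simp add: sum.lessThan_Suc_shift del: sum.lessThan_Suc)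
  have CE: "C = xs ! 0 + E" unfolding C_def E_def by (simp add: sum.lessThan_Suc_shift w_def del: sum.lessThan_Suc)
  have "E \<le> (\<Sum>i<k. 2*k * xs ! Suc i)"
    unfolding E_def by (rule sum_mono, rule mult_le_mono1) (auto simp: w_def)
  also have "\<dots> = 2*k*S" by (simp add: S_def sum_distrib_left)
  finally have ES: "E \<le> 2*k*S" .
  have Eev: "even E" unfolding E_def by (rule dvd_sum) (simp add: w_def)
  have odd: "C + 2*k \<le> 2*k*M + 1" if "odd C"
  proof -
    have "odd (xs ! 0)" using that Eev CE by simp
    then obtain y where y: "xs ! 0 = y + 1" by (metis add.commute odd_pos less_imp_Suc_add plus_1_eq_Suc)
    have "y \<le> 2*k*y" using assms(2) by simp
    moreover have "2*k*M = 2*k*y + 2*k + 2*k*S" using MS y by (simp add: algebra_simps)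
    moreover have "C = y + 1 + E" using CE y by simp
    ultimately show ?thesis using ES by linarith
  qed
  show ?thesis using nMC CM odd by blast
qed

lemma mm_le:
  assumes "k > 0" "c \<le> 2*k*M" "odd c \<longrightarrow> c + 2*k \<le> 2*k*M + 1"
  shows "mm k c \<le> M"
proof (cases "even c")
  case True
  have "c + 2*k - 1 < (M+1) * (2*k)" using assms(1,2) by (simp add: algebra_simps)
  then have "(c + 2*k - 1) div (2*k) < M + 1" by (rule less_mult_imp_div_less)
  then show ?thesis using True by (simp add: mm_def)
next
  case False
  have "c + 2*k - 2 < M * (2*k)" using assms(1,3) False by (simp add: algebra_simps)
  then have "(c + 2*k - 2) div (2*k) < M" by (rule less_mult_imp_div_less)
  then show ?thesis using False by (simp add: mm_def)
qed

lemma mm_le1: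
  assumes "k > 0" "c < C" "C \<le> 2*k*M"
  shows "mm k c \<le> M + 1"
proof -
  have "mm k c \<le> (c + 2*k - 1) div (2*k) + 1"
    by (auto simp: mm_def intro: div_le_mono)
  moreover have "c + 2*k - 1 < (M+1) * (2*k)" using assms by (simp add: algebra_simps)
  then have "(c + 2*k - 1) div (2*k) < M + 1" by (rule less_mult_imp_div_less)
  ultimately show ?thesis by simp
qed

lemma lower:
  assumes "coprime a d" "k > 0" "h < d" "c < a"
    and "representable (gens a h d k) n" "n mod a = (c*d) mod a"
  shows "mm k c * h * a + c*d \<le> n"
proof -
  obtain M C where MC: "n = M*h*a + C*d" "C \<le> 2*k*M" "odd C \<longrightarrow> C + 2*k \<le> 2*k*M + 1"
    using rep_decomp[OF assms(5,2)] by blast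
  have "(C*d) mod a = (c*d) mod a" using assms(6) MC(1) by simp
  then have "[C*d = c*d] (mod a)" by (simp add: cong_def)
  then have "[C = c] (mod a)" using assms(1) by (simp add: cong_mult_rcancel_nat coprime_commute)
  then have Cm: "C mod a = c" using assms(4) by (simp add: cong_def)
  define j where "j = C div a"
  have Cj: "C = c + a*j" using Cm j_def by (metis add.commute div_mult_mod_eq mult.commute)
  show ?thesis
  proof (cases "j = 0")
    case True
    then have "C = c" using Cj by simp
    then have "mm k c \<le> M" using mm_le[OF assms(2)] MC by simp
    then have "mm k c * h * a \<le> M * h * a" by (simp add: mult_le_mono1)
    then show ?thesis using MC(1) \<open>C = c\<close> by simp
  next
    case False
    then have ja: "a \<le> a*j" by simp
    have "c < C" using Cj False assms(4) by simp
    then have "mm k c \<le> M + 1" using mm_le1[OF assms(2) _ MC(2)] by simp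
    then have "mm k c * (h * a) \<le> (M+1) * (h * a)" by (rule mult_le_mono1)
    then have t1: "mm k c * h * a \<le> M*h*a + h*a" by (simp add: algebra_simps)
    have "h * a \<le> d * a" using assms(3) by simp
    also have "d * a \<le> d * (a*j)" using ja by simp
    finally have t2: "h*a \<le> d*(a*j)" .
    have "C*d = c*d + d*(a*j)" using Cj by (simp add: algebra_simps)
    then show ?thesis using MC(1) t1 t2 by linarith
  qed
qed

lemma N_eq:
  assumes "coprime a d" "k > 0" "h < d" "c < a"
  shows "N a (gens a h d k) ((c*d) mod a) = mm k c * h * a + c*d"
  unfolding N_def
proof (rule Least_equality)
  show "(mm k c * h * a + c * d) mod a = c * d mod a \<and> representable (gens a h d k) (mm k c * h * a + c * d)"
    using rep_mm[OF assms(2)] by simp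
  show "\<And>y. y mod a = c * d mod a \<and> representable (gens a h d k) y \<Longrightarrow> mm k c * h * a + c * d \<le> y"
    using lower[OF assms] by blast
qed

lemma sum_reindex:
  fixes x :: real
  assumes "coprime a d" "k > 0" "h < d" "a > 0"
  shows "(\<Sum>r = 0..a-1. x ^ N a (gens a h d k) r) = (\<Sum>c<a. x ^ (mm k c * h * a + c*d))"
proof -
  have I: "{0..a-1} = {..<a}" using assms(4) by auto
  have inj: "inj_on (\<lambda>c. (c*d) mod a) {..<a}"
  proof (rule inj_onI)
    fix u v assume uv: "u \<in> {..<a}" "v \<in> {..<a}" "(u*d) mod a = (v*d) mod a"
    then have "[u*d = v*d] (mod a)" by (simp add: cong_def)
    then have "[u = v] (mod a)" using assms(1) by (simp add: cong_mult_rcancel_nat coprime_commute)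
    then show "u = v" using uv by (simp add: cong_def)
  qed
  have "(\<lambda>c. (c*d) mod a) ` {..<a} = {..<a}"
    by (rule endo_inj_surj) (use inj assms(4) in auto)
  then have bij: "bij_betw (\<lambda>c. (c*d) mod a) {..<a} {..<a}" using inj by (simp add: bij_betw_def)
  have "(\<Sum>r<a. x ^ N a (gens a h d k) r) = (\<Sum>c<a. x ^ N a (gens a h d k) ((c*d) mod a))"
    by (rule sum.reindex_bij_betw[OF bij, symmetric])
  also have "\<dots> = (\<Sum>c<a. x ^ (mm k c * h * a + c*d))"
    by (rule sum.cong) (use N_eq[OF assms(1-3)] in auto)
  finally show ?thesis using I by simp
qed

lemma SPLIT: "(\<Sum>c<m+n. f c) = (\<Sum>c<m. f c) + (\<Sum>l<n. f (m+l))" for f :: "nat \<Rightarrow> real"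
  by (induction n) (simp_all add: add.assoc)

lemma BLOCK: "(\<Sum>c<s*b. f c) = (\<Sum>i<s. \<Sum>l<b. f (i*b+l))" for f :: "nat \<Rightarrow> real"
proof (induction s)
  case 0 then show ?case by simp
next
  case (Suc s)
  have "(\<Sum>c<Suc s*b. f c) = (\<Sum>c<s*b + b. f c)" by (simp add: add.commute)
  also have "\<dots> = (\<Sum>c<s*b. f c) + (\<Sum>l<b. f (s*b+l))" by (rule SPLIT)
  finally show ?case using Suc by simp
qed

lemma EO1: "(\<Sum>l<2*n. f l) = (\<Sum>j<n. f (2*j)) + (\<Sum>j<n. f (2*j+1))" for f :: "nat \<Rightarrow> real"
  by (induction n) (simp_all add: algebra_simps)

lemma EO2: "(\<Sum>l<2*n+1. f l) = (\<Sum>j<n+1. f (2*j)) + (\<Sum>j<n. f (2*j+1))" for f :: "nat \<Rightarrow> real"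
  by (induction n) (simp_all add: algebra_simps)

lemma pow_lt1: "\<bar>x::real\<bar> < 1 \<Longrightarrow> n > 0 \<Longrightarrow> 1 - x^n \<noteq> 0"
proof
  assume "\<bar>x\<bar> < 1" "n > 0" "1 - x^n = 0"
  then have "\<bar>x^n\<bar> = 1" by simp
  moreover have "\<bar>x\<bar>^n < 1" using \<open>\<bar>x\<bar> < 1\<close> \<open>n > 0\<close> by (simp add: power_less_one_iff)
  ultimately show False by (simp add: power_abs)
qed

lemma GEO: "\<bar>x::real\<bar> < 1 \<Longrightarrow> n > 0 \<Longrightarrow> (\<Sum>i<m. x^(n*i)) = (1 - x^(n*m)) / (1 - x^n)"
proof -
  assume a: "\<bar>x::real\<bar> < 1" "n > 0"
  have ne: "x^n \<noteq> 1" using pow_lt1[OF a] by simp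
  have "(\<Sum>i<m. x^(n*i)) = (\<Sum>i<m. (x^n)^i)" by (simp add: power_mult)
  also have "\<dots> = (1 - (x^n)^m) / (1 - x^n)" using ne by (simp add: sum_gp_strict)
  finally show ?thesis by (simp add: power_mult)
qed

lemma SINGLE: "\<bar>x::real\<bar> < 1 \<Longrightarrow> P > 0 \<Longrightarrow> (\<Sum>i<m. x^(A + P*i)) = x^A * (1 - x^(P*m)) / (1 - x^P)"
proof -
  assume a: "\<bar>x::real\<bar> < 1" "P > 0"
  have "(\<Sum>i<m. x^(A + P*i)) = x^A * (\<Sum>i<m. x^(P*i))" by (simp add: power_add sum_distrib_left)
  then show ?thesis using GEO[OF a] by simp
qed

lemma DOUBLE: "\<bar>x::real\<bar> < 1 \<Longrightarrow> P > 0 \<Longrightarrow> Q > 0 \<Longrightarrow>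
   (\<Sum>i<m. \<Sum>j<n. x^(A + P*i + Q*j)) = x^A * (1 - x^(P*m)) * (1 - x^(Q*n)) / ((1 - x^P) * (1 - x^Q))"
proof -
  assume a: "\<bar>x::real\<bar> < 1" "P > 0" "Q > 0"
  have "x^A * ((\<Sum>i<m. x^(P*i)) * (\<Sum>j<n. x^(Q*j))) = x^A * (\<Sum>i<m. \<Sum>j<n. x^(P*i) * x^(Q*j))"
    by (simp only: sum_product)
  also have "\<dots> = (\<Sum>i<m. \<Sum>j<n. x^A * (x^(P*i) * x^(Q*j)))"
    by (simp only: sum_distrib_left)
  also have "\<dots> = (\<Sum>i<m. \<Sum>j<n. x^(A + P*i + Q*j))"
    by (simp add: power_add mult.assoc)
  finally have "(\<Sum>i<m. \<Sum>j<n. x^(A + P*i + Q*j)) = x^A * ((\<Sum>i<m. x^(P*i)) * (\<Sum>j<n. x^(Q*j)))" by simp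
  then show ?thesis using GEO[OF a(1,2)] GEO[OF a(1,3)] by simp
qed

lemma V1: "k > 0 \<Longrightarrow> mm k (2*k*i+1) * h * a + (2*k*i+1)*d = h*a + d + (h*a+2*k*d)*i"
proof -
  assume k: "k > 0"
  have "2*k*i+1 + 2*k - 2 = 2*k*i + (2*k-1)" using k by simp
  moreover have "(2*k*i + (2*k-1)) div (2*k) = i" using k by (intro div_help) simp
  ultimately have "mm k (2*k*i+1) = i + 1" by (simp add: mm_def)
  then show ?thesis by (simp add: algebra_simps)
qed

lemma V2: "k > 0 \<Longrightarrow> j < k \<Longrightarrow> mm k (2*k*i+2*j+2) * h * a + (2*k*i+2*j+2)*d = h*a + 2*d + (h*a+2*k*d)*i + 2*d*j"
proof -
  assume k: "k > 0" "j < k"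
  have "even (2*k*i+2*j+2)" by simp
  moreover have "2*k*i+2*j+2 + 2*k - 1 = 2*k*(i+1) + (2*j+1)" using k by simp
  moreover have "(2*k*(i+1) + (2*j+1)) div (2*k) = i+1" using k by (intro div_help) simp
  ultimately have "mm k (2*k*i+2*j+2) = i + 1" unfolding mm_def by presburger
  then show ?thesis by (simp add: algebra_simps)
qed

lemma V3: "k > 0 \<Longrightarrow> j + 1 < k \<Longrightarrow> mm k (2*k*i+2*j+3) * h * a + (2*k*i+2*j+3)*d = 2*h*a + 3*d + (h*a+2*k*d)*i + 2*d*j"
proof -
  assume k: "k > 0" "j + 1 < k"
  have "odd (2*k*i+2*j+3)" by (simp add: even_add)
  moreover have "2*k*i+2*j+3 + 2*k - 2 = 2*k*(i+1) + (2*j+1)" using k by simp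
  moreover have "(2*k*(i+1) + (2*j+1)) div (2*k) = i+1" using k by (intro div_help) simp
  ultimately have "mm k (2*k*i+2*j+3) = i + 2" unfolding mm_def by presburger
  then show ?thesis by (simp add: algebra_simps)
qed

theorem mainTheorem14:
  fixes a h d k s t :: nat and x :: real
  assumes "coprime a d"
    and "a > 0" and "h > 0" and "d > 0" and "k > 0"
    and "a > 2" and "d > h" and "1 \<le> 2*k" and "2*k \<le> a - 1"
    and "a - 1 = 2*k*s + t" and "1 \<le> t" and "t \<le> 2*k"
    and "\<bar>x\<bar> < 1"
  shows "(\<Sum>r = 0..a-1. x ^ N a (gens a h d k) r) =
      1 + x^(h*a+d) * (1 - x^((h*a+2*k*d)*(s+1))) / (1 - x^(h*a+2*k*d))
        + x^(h*a+2*d) * (1 - x^((h*a+2*k*d)*s)) * (1 - x^(2*d*k))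
            / ((1 - x^(h*a+2*k*d)) * (1 - x^(2*d)))
        + x^(2*h*a+3*d) * (1 - x^((h*a+2*k*d)*s)) * (1 - x^(2*d*(k-1)))
            / ((1 - x^(h*a+2*k*d)) * (1 - x^(2*d)))
        + (if odd t then
             x^(h*a*(s+1)+d*(2*k*s+2)) * (1 - x^(d*(t-1))) / (1 - x^(2*d))
           + x^(h*a*(s+2)+d*(2*k*s+3)) * (1 - x^(d*(t-1))) / (1 - x^(2*d))
           else
             x^(h*a*(s+1)+d*(2*k*s+2)) * (1 - x^(d*t)) / (1 - x^(2*d))
           + x^(h*a*(s+2)+d*(2*k*s+3)) * (1 - x^(d*(t-2))) / (1 - x^(2*d)))"
proof -
  have kpos: "k > 0" and apos: "a > 0" and hd: "h < d" and cop: "coprime a d" and dpos: "d > 0"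
    using assms by auto
  have xa: "\<bar>x\<bar> < 1" using assms by simp
  define P where "P = h*a+2*k*d"
  have Ppos: "P > 0" using kpos dpos by (simp add: P_def)
  have dpos2: "2*d > 0" using dpos by simp
  define G where "G c = x ^ (mm k c * h * a + c*d)" for c
  have a_eq: "a = Suc (2*k*s + t)" using assms(2,10) by linarith
  have L: "(\<Sum>r = 0..a-1. x ^ N a (gens a h d k) r) = (\<Sum>c<a. G c)"
    using sum_reindex[OF cop kpos hd apos] by (simp add: G_def)
  have G0: "G 0 = 1" using kpos by (simp add: G_def mm_def)
  have GV1: "G (2*k*i+1) = x^(h*a+d+P*i)" for i
    unfolding G_def P_def using V1[OF kpos, of i h a d] by (simp only: mult.commute)
  have GV2: "G (2*k*i+2*j+2) = x^(h*a+2*d+P*i+2*d*j)" if "j < k" for i j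
    unfolding G_def P_def using V2[OF kpos that, of i h a d] by (simp only: mult.commute)
  have GV3: "G (2*k*i+2*j+3) = x^(2*h*a+3*d+P*i+2*d*j)" if "j + 1 < k" for i j
    unfolding G_def P_def using V3[OF kpos that, of i h a d] by (simp only: mult.commute)
  have e: "Suc (2*(k-1)+1) = 2*k" using kpos by simp
  have X: "(\<Sum>l<Suc (2*(k-1)+1). f l) = f 0 + ((\<Sum>j<k. f (2*j+1)) + (\<Sum>j<k-1. f (2*j+2)))" for f :: "nat \<Rightarrow> real"
  proof -
    have "(\<Sum>l<Suc (2*(k-1)+1). f l) = f 0 + (\<Sum>l<2*(k-1)+1. f (Suc l))"
      by (rule sum.lessThan_Suc_shift)
    also have "(\<Sum>l<2*(k-1)+1. f (Suc l)) = (\<Sum>j<k-1+1. f (Suc (2*j))) + (\<Sum>j<k-1. f (Suc (2*j+1)))"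
      by (rule EO2)
    also have "k-1+1 = k" using kpos by simp
    finally show ?thesis by simp
  qed
  note X' = X[unfolded e]
  have inner: "(\<Sum>l<2*k. G (Suc (i*(2*k)+l))) = x^(h*a+d+P*i) + ((\<Sum>j<k. x^(h*a+2*d+P*i+2*d*j)) + (\<Sum>j<k-1. x^(2*h*a+3*d+P*i+2*d*j)))" for i
  proof -
    have "(\<Sum>l<2*k. G (Suc (i*(2*k)+l))) = G (Suc (i*(2*k)+0)) + ((\<Sum>j<k. G (Suc (i*(2*k)+(2*j+1)))) + (\<Sum>j<k-1. G (Suc (i*(2*k)+(2*j+2)))))"
      by (rule X')
    also have "G (Suc (i*(2*k)+0)) = x^(h*a+d+P*i)" using GV1[of i] by (simp add: algebra_simps)
    also have "(\<Sum>j<k. G (Suc (i*(2*k)+(2*j+1)))) = (\<Sum>j<k. x^(h*a+2*d+P*i+2*d*j))"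
    proof (rule sum.cong)
      fix j assume "j \<in> {..<k}"
      then have "j < k" by simp
      have "Suc (i*(2*k)+(2*j+1)) = 2*k*i+2*j+2" by (simp add: algebra_simps)
      then have "G (Suc (i*(2*k)+(2*j+1))) = G (2*k*i+2*j+2)" by (rule arg_cong)
      then show "G (Suc (i*(2*k)+(2*j+1))) = x^(h*a+2*d+P*i+2*d*j)" using GV2[OF \<open>j < k\<close>, of i] by simp
    qed simp
    also have "(\<Sum>j<k-1. G (Suc (i*(2*k)+(2*j+2)))) = (\<Sum>j<k-1. x^(2*h*a+3*d+P*i+2*d*j))"
    proof (rule sum.cong)
      fix j assume "j \<in> {..<k-1}"
      then have "j + 1 < k" by simp
      have "Suc (i*(2*k)+(2*j+2)) = 2*k*i+2*j+3" by (simp add: algebra_simps)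
      then have "G (Suc (i*(2*k)+(2*j+2))) = G (2*k*i+2*j+3)" by (rule arg_cong)
      then show "G (Suc (i*(2*k)+(2*j+2))) = x^(2*h*a+3*d+P*i+2*d*j)" using GV3[OF \<open>j + 1 < k\<close>, of i] by simp
    qed simp
    finally show ?thesis .
  qed
  define A1 where "A1 = h*a*(s+1)+d*(2*k*s+2)"
  define A2 where "A2 = h*a*(s+2)+d*(2*k*s+3)"
  have TE: "G (Suc (s*(2*k) + Suc (2*j))) = x^(A1 + 2*d*j)" if "j < k" for j
  proof -
    have "Suc (s*(2*k) + Suc (2*j)) = 2*k*s+2*j+2" by (simp add: algebra_simps)
    then have "G (Suc (s*(2*k) + Suc (2*j))) = G (2*k*s+2*j+2)" by (rule arg_cong)
    moreover have "h*a+2*d+P*s+2*d*j = A1 + 2*d*j" by (simp add: A1_def P_def algebra_simps)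
    ultimately show ?thesis using GV2[OF that, of s] by (simp only:)
  qed
  have TO: "G (Suc (s*(2*k) + Suc (2*j+1))) = x^(A2 + 2*d*j)" if "j + 1 < k" for j
  proof -
    have "Suc (s*(2*k) + Suc (2*j+1)) = 2*k*s+2*j+3" by (simp add: algebra_simps)
    then have "G (Suc (s*(2*k) + Suc (2*j+1))) = G (2*k*s+2*j+3)" by (rule arg_cong)
    moreover have "2*h*a+3*d+P*s+2*d*j = A2 + 2*d*j" by (simp add: A2_def P_def algebra_simps)
    ultimately show ?thesis using GV3[OF that, of s] by (simp only:)
  qed
  define F1 where "F1 = (if odd t then
             x^(h*a*(s+1)+d*(2*k*s+2)) * (1 - x^(d*(t-1))) / (1 - x^(2*d))
           + x^(h*a*(s+2)+d*(2*k*s+3)) * (1 - x^(d*(t-1))) / (1 - x^(2*d))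
           else
             x^(h*a*(s+1)+d*(2*k*s+2)) * (1 - x^(d*t)) / (1 - x^(2*d))
           + x^(h*a*(s+2)+d*(2*k*s+3)) * (1 - x^(d*(t-2))) / (1 - x^(2*d)))"
  have tail: "(\<Sum>l<t-1. G (Suc (s*(2*k) + Suc l))) = F1"
  proof (cases "odd t")
    case True
    then obtain p where p: "t = 2*p+1" by (metis oddE)
    have pk: "p < k" using p assms(12) by simp
    have "(\<Sum>l<t-1. G (Suc (s*(2*k) + Suc l))) = (\<Sum>j<p. G (Suc (s*(2*k) + Suc (2*j)))) + (\<Sum>j<p. G (Suc (s*(2*k) + Suc (2*j+1))))"
      using p EO1 by simp
    also have "\<dots> = (\<Sum>j<p. x^(A1 + 2*d*j)) + (\<Sum>j<p. x^(A2 + 2*d*j))"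
      using TE TO pk p assms(12) by (intro arg_cong2[where f="(+)"] sum.cong) auto
    also have "\<dots> = x^A1 * (1 - x^(2*d*p)) / (1 - x^(2*d)) + x^A2 * (1 - x^(2*d*p)) / (1 - x^(2*d))"
      using SINGLE[OF xa dpos2] by simp
    also have "\<dots> = F1"
    proof -
      have "d*(t-1) = 2*d*p" using p by simp
      then show ?thesis using True unfolding F1_def A1_def A2_def by (simp only: if_True not_False_eq_True)
    qed
    finally show ?thesis .
  next
    case False
    then obtain q where q: "t = 2*q" by (metis evenE)
    define p where "p = q - 1"
    have p: "t = 2*p+2" using q assms(11) by (simp add: p_def)
    have pk: "p < k" using p assms(12) by simp
    have "(\<Sum>l<t-1. G (Suc (s*(2*k) + Suc l))) = (\<Sum>j<p+1. G (Suc (s*(2*k) + Suc (2*j)))) + (\<Sum>j<p. G (Suc (s*(2*k) + Suc (2*j+1))))"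
      using p EO2 by simp
    also have "\<dots> = (\<Sum>j<p+1. x^(A1 + 2*d*j)) + (\<Sum>j<p. x^(A2 + 2*d*j))"
      using TE TO pk p assms(12) by (intro arg_cong2[where f="(+)"] sum.cong) auto
    also have "\<dots> = x^A1 * (1 - x^(2*d*(p+1))) / (1 - x^(2*d)) + x^A2 * (1 - x^(2*d*p)) / (1 - x^(2*d))"
      using SINGLE[OF xa dpos2] by simp
    also have "\<dots> = F1"
    proof -
      have "d*t = 2*d*(p+1)" "d*(t-2) = 2*d*p" using p by simp_all
      then show ?thesis using False unfolding F1_def A1_def A2_def by (simp only: if_False)
    qed
    finally show ?thesis .
  qed
  have "(\<Sum>c<a. G c) = G 0 + (\<Sum>c<s*(2*k)+t. G (Suc c))"
    unfolding a_eq by (simp only: sum.lessThan_Suc_shift mult.commute)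
  also have "\<dots> = G 0 + ((\<Sum>c<s*(2*k). G (Suc c)) + (\<Sum>l<t. G (Suc (s*(2*k)+l))))"
    by (simp only: SPLIT)
  also have "(\<Sum>c<s*(2*k). G (Suc c)) = (\<Sum>i<s. \<Sum>l<2*k. G (Suc (i*(2*k)+l)))"
    by (rule BLOCK)
  also have "\<dots> = (\<Sum>i<s. x^(h*a+d+P*i)) + ((\<Sum>i<s. \<Sum>j<k. x^(h*a+2*d+P*i+2*d*j)) + (\<Sum>i<s. \<Sum>j<k-1. x^(2*h*a+3*d+P*i+2*d*j)))"
    by (simp only: inner sum.distrib)
  also have "(\<Sum>l<t. G (Suc (s*(2*k)+l))) = G (Suc (s*(2*k)+0)) + (\<Sum>l<t-1. G (Suc (s*(2*k) + Suc l)))"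
  proof -
    have e: "Suc (t-1) = t" using assms(11) by simp
    show ?thesis using sum.lessThan_Suc_shift[of "\<lambda>l. G (Suc (s*(2*k)+l))" "t-1", unfolded e] by simp
  qed
  also have "G (Suc (s*(2*k)+0)) = x^(h*a+d+P*s)" using GV1[of s] by (simp add: algebra_simps)
  also note tail
  finally have S: "(\<Sum>c<a. G c) = 1 + (\<Sum>i<s+1. x^(h*a+d+P*i)) + (\<Sum>i<s. \<Sum>j<k. x^(h*a+2*d+P*i+2*d*j)) + (\<Sum>i<s. \<Sum>j<k-1. x^(2*h*a+3*d+P*i+2*d*j)) + F1"
    using G0 by (simp add: ac_simps)
  have D2: "(\<Sum>i<s. \<Sum>j<k. x^(h*a+2*d+P*i+2*d*j)) = x^(h*a+2*d) * (1 - x^(P*s)) * (1 - x^(2*d*k)) / ((1 - x^P) * (1 - x^(2*d)))"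
    by (rule DOUBLE[OF xa Ppos dpos2])
  have D3: "(\<Sum>i<s. \<Sum>j<k-1. x^(2*h*a+3*d+P*i+2*d*j)) = x^(2*h*a+3*d) * (1 - x^(P*s)) * (1 - x^(2*d*(k-1))) / ((1 - x^P) * (1 - x^(2*d)))"
    by (rule DOUBLE[OF xa Ppos dpos2])
  have D1: "(\<Sum>i<s+1. x^(h*a+d+P*i)) = x^(h*a+d) * (1 - x^(P*(s+1))) / (1 - x^P)"
    by (rule SINGLE[OF xa Ppos])
  show ?thesis unfolding L S D1 D2 D3 unfolding F1_def P_def by simp
qed

end
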